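(* Let $f,g\in\mathbb{R}[x_1,\dots,x_n]$ be forms, where $f$ is nonconstant with strictly positive coefficients and $g(x)>0$ for all $x\in\mathbb{R}_+^n\setminus\{0\}$. If $\deg(f)$ divides $\deg(g)$, then there exists an integer $m\ge1$ such that all coefficients of $f^mg$ are nonnegative.
   Context: A form is a homogeneous polynomial. A form $f=\sum_{|w|=d}a_wx^w$ of degree $d$ has strictly positive coefficients if $a_w>0$ for every $w\in\mathbb{Z}_{\ge0}^n$ with $|w|=d$. $\mathbb{R}_+^n=\{x\in\mathbb{R}^n: x_i\ge0\ \forall i\}$. *)

theory Defs
  imports Complex_Main "HOL-Library.Poly_Mapping"
begin

(* Real polynomials in the variables x_0, x_1, ...: a polynomial is a finitely
   supported map from exponent vectors (nat \<Rightarrow>\<^sub>0 nat) to real coefficients. *)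
type_synonym rpoly = "(nat \<Rightarrow>\<^sub>0 nat) \<Rightarrow>\<^sub>0 real"

definition mon_deg :: "(nat \<Rightarrow>\<^sub>0 nat) \<Rightarrow> nat" where
  "mon_deg w = (\<Sum>i\<in>Poly_Mapping.keys w. Poly_Mapping.lookup w i)"

definition mon_in :: "nat \<Rightarrow> (nat \<Rightarrow>\<^sub>0 nat) \<Rightarrow> bool" where
  "mon_in n w \<longleftrightarrow> Poly_Mapping.keys w \<subseteq> {..<n}"

definition is_form :: "nat \<Rightarrow> nat \<Rightarrow> rpoly \<Rightarrow> bool" where
  "is_form n d p \<longleftrightarrow> (\<forall>w\<in>Poly_Mapping.keys p. mon_in n w \<and> mon_deg w = d)"

definition eval_poly :: "rpoly \<Rightarrow> (nat \<Rightarrow> real) \<Rightarrow> real" where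
  "eval_poly p x = (\<Sum>w\<in>Poly_Mapping.keys p. Poly_Mapping.lookup p w * (\<Prod>i\<in>Poly_Mapping.keys w. x i ^ Poly_Mapping.lookup w i))"

end

theory Submission
  imports Defs "HOL-Analysis.Analysis"
begin


abbreviation LK where "LK \<equiv> Poly_Mapping.lookup"
abbreviation KS where "KS \<equiv> Poly_Mapping.keys"
abbreviation SG where "SG \<equiv> Poly_Mapping.single"

lemma lookup_mult_fin:
  fixes p q :: rpoly
  shows "LK (p * q) k = (\<Sum>l\<in>KS p. LK p l * (\<Sum>m\<in>KS q. (LK q m when k = l + m)))"
proof -
  have "LK (p * q) k = (\<Sum>l. LK p l * (\<Sum>m. LK q m when k = l + m))" by (rule lookup_mult)
  also have "\<dots> = (\<Sum>l. LK p l * (\<Sum>m\<in>KS q. LK q m when k = l + m))"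
    by (intro Sum_any.cong arg_cong[where f="\<lambda>x. _ * x"] Sum_any.expand_superset)
       (auto simp: in_keys_iff)
  also have "\<dots> = (\<Sum>l\<in>KS p. LK p l * (\<Sum>m\<in>KS q. LK q m when k = l + m))"
    by (intro Sum_any.expand_superset) (auto simp: in_keys_iff)
  finally show ?thesis .
qed

lemma lk_minus_nat: "LK ((a::nat \<Rightarrow>\<^sub>0 nat) - b) i = LK a i - LK b i"
  by (simp add: lookup_minus)

lemma add_eq_iff_nat:
  fixes a b q :: "nat \<Rightarrow>\<^sub>0 nat"
  shows "(a = b + q) \<longleftrightarrow> ((\<forall>i. LK b i \<le> LK a i) \<and> q = a - b)"
  by (auto simp: poly_mapping_eq_iff lookup_add lk_minus_nat fun_eq_iff)

lemma lookup_single_mult: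
  fixes p :: rpoly
  shows "LK (SG b c * p) a = (if (\<forall>i. LK b i \<le> LK a i) then c * LK p (a - b) else 0)"
proof -
  have "LK (SG b c * p) a = (\<Sum>l. LK (SG b c) l * (\<Sum>m. LK p m when a = l + m))" by (rule lookup_mult)
  also have "\<dots> = (\<Sum>l. ((c * (\<Sum>m. LK p m when a = b + m)) when l = b))"
    by (intro Sum_any.cong) (auto simp: lookup_single when_def)
  also have "\<dots> = c * (\<Sum>m. LK p m when a = b + m)" by simp
  also have "(\<Sum>m. LK p m when a = b + m) = (\<Sum>m. (LK p m when (\<forall>i. LK b i \<le> LK a i)) when m = a - b)"
    by (intro Sum_any.cong) (auto simp: add_eq_iff_nat when_def)
  finally show ?thesis by (simp add: when_def)
qed

definition nn :: "rpoly \<Rightarrow> bool" where "nn p \<longleftrightarrow> (\<forall>w. LK p w \<ge> 0)"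

lemma nn_mult: "nn p \<Longrightarrow> nn q \<Longrightarrow> nn (p * q)"
  unfolding nn_def lookup_mult_fin
  by (auto intro!: sum_nonneg mult_nonneg_nonneg simp: when_def)

lemma nn_add: "nn p \<Longrightarrow> nn q \<Longrightarrow> nn (p + q)"
  unfolding nn_def by (simp add: lookup_add)

lemma nn_sum: "(\<And>i. i \<in> A \<Longrightarrow> nn (f i)) \<Longrightarrow> nn (sum f A)"
  unfolding nn_def by (auto simp: lookup_sum intro!: sum_nonneg)

lemma nn_power: "nn p \<Longrightarrow> nn (p ^ k)"
proof (induction k)
  case 0 then show ?case by (simp add: nn_def lookup_one when_def)
next
  case (Suc k) then show ?case using nn_mult by simp
qed

lemma nn_of_nat: "nn (of_nat k)"
  by (simp add: nn_def lookup_of_nat when_def)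

lemma nn_single: "c \<ge> 0 \<Longrightarrow> nn (SG b c)"
  by (simp add: nn_def lookup_single when_def)

definition ev :: "nat \<Rightarrow> nat \<Rightarrow>\<^sub>0 nat" where "ev i = SG i 1"
definition sv :: "nat \<Rightarrow> rpoly" where "sv n = (\<Sum>i<n. SG (ev i) 1)"
definition mfac :: "nat \<Rightarrow> (nat \<Rightarrow>\<^sub>0 nat) \<Rightarrow> real" where "mfac n w = (\<Prod>i<n. fact (LK w i))"
definition degn :: "nat \<Rightarrow> (nat \<Rightarrow>\<^sub>0 nat) \<Rightarrow> nat" where "degn n w = (\<Sum>i<n. LK w i)"

lemma mon_in_iff: "mon_in n w \<longleftrightarrow> (\<forall>j. n \<le> j \<longrightarrow> LK w j = 0)"
  unfolding mon_in_def subset_iff in_keys_iff by (metis lessThan_iff not_le)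

lemma mon_deg_eq: "mon_in n w \<Longrightarrow> mon_deg w = degn n w"
  unfolding mon_deg_def degn_def mon_in_def
  by (rule sum.mono_neutral_left) (auto simp: in_keys_iff)

lemma lk_minus_e: "LK ((w::nat\<Rightarrow>\<^sub>0nat) - ev i) j = LK w j - (if i = j then 1 else 0)"
  by (auto simp: lk_minus_nat lookup_single when_def ev_def)

lemma le_e_iff: "(\<forall>j. LK (ev i) j \<le> LK w j) \<longleftrightarrow> LK w i \<ge> 1"
  by (auto simp: lookup_single when_def ev_def)

lemma mfac_remove:
  fixes w :: "nat \<Rightarrow>\<^sub>0 nat"
  assumes "i < n" "LK w i \<ge> 1"
  shows "mfac n w = real (LK w i) * mfac n (w - ev i)"
proof -
  have "mfac n w = fact (LK w i) * (\<Prod>j\<in>{..<n}-{i}. fact (LK w j))"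
    unfolding mfac_def using assms by (subst prod.remove[of _ i]) auto
  moreover have "mfac n (w - ev i) = fact (LK w i - 1) * (\<Prod>j\<in>{..<n}-{i}. fact (LK w j))"
    unfolding mfac_def using assms by (subst prod.remove[of _ i]) (auto simp: lk_minus_e intro!: prod.cong)
  moreover have "(fact (LK w i) :: real) = real (LK w i) * fact (LK w i - 1)"
    using assms by (metis fact_num_eq_if not_one_le_zero)
  ultimately show ?thesis by simp
qed

lemma degn_minus_e:
  fixes w :: "nat \<Rightarrow>\<^sub>0 nat"
  assumes "i < n" "LK w i \<ge> 1"
  shows "degn n (w - ev i) = degn n w - 1" "degn n w \<ge> 1"
proof -
  have "degn n w = LK w i + (\<Sum>j\<in>{..<n}-{i}. LK w j)"
    unfolding degn_def using assms by (subst sum.remove[of _ i]) auto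
  moreover have "degn n (w - ev i) = (LK w i - 1) + (\<Sum>j\<in>{..<n}-{i}. LK w j)"
    unfolding degn_def using assms by (subst sum.remove[of _ i]) (auto simp: lk_minus_e intro!: sum.cong)
  ultimately show "degn n (w - ev i) = degn n w - 1" "degn n w \<ge> 1" using assms by auto
qed

lemma mon_in_minus_e: "i < n \<Longrightarrow> mon_in n ((w::nat\<Rightarrow>\<^sub>0nat) - ev i) \<longleftrightarrow> mon_in n w"
  unfolding mon_in_iff lk_minus_e by auto

lemma lookup_sv_mult:
  "LK (sv n * p) w = (\<Sum>i<n. if LK w i \<ge> 1 then LK p (w - ev i) else 0)"
  unfolding sv_def sum_distrib_right lookup_sum lookup_single_mult le_e_iff by (simp only: mult_1)

lemma mfac_pos: "mfac n w > 0"
  unfolding mfac_def by (auto intro: prod_pos)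

lemma degn_zero: "mon_in n w \<Longrightarrow> degn n w = 0 \<Longrightarrow> w = 0"
  unfolding degn_def mon_in_iff by (auto simp: poly_mapping_eq_iff fun_eq_iff) (metis lessThan_iff not_le)

lemma lookup_sv_pow:
  "LK (sv n ^ N) w = (if mon_in n w \<and> degn n w = N then fact N / mfac n w else 0)"
proof (induction N arbitrary: w)
  case 0
  show ?case
  proof (cases "w = 0")
    case True then show ?thesis by (simp add: mon_in_def degn_def mfac_def lookup_one)
  next
    case False then show ?thesis using degn_zero by (auto simp: lookup_one when_def)
  qed
next
  case (Suc N)
  have eq: "LK (sv n ^ Suc N) w = (\<Sum>i<n. if LK w i \<ge> 1 then LK (sv n ^ N) (w - ev i) else 0)"
    by (simp add: lookup_sv_mult)
  show ?case
  proof (cases "mon_in n w \<and> degn n w = Suc N")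
    case True
    have "\<And>i. i < n \<Longrightarrow> (if LK w i \<ge> 1 then LK (sv n ^ N) (w - ev i) else 0) = fact N / mfac n w * real (LK w i)"
    proof -
      fix i assume i: "i < n"
      show "(if LK w i \<ge> 1 then LK (sv n ^ N) (w - ev i) else 0) = fact N / mfac n w * real (LK w i)"
      proof (cases "LK w i \<ge> 1")
        case True
        then show ?thesis using i \<open>mon_in n w \<and> degn n w = Suc N\<close> mfac_pos[of n "w - ev i"]
          by (simp add: Suc.IH mon_in_minus_e degn_minus_e mfac_remove[OF i True] field_simps)
      qed auto
    qed
    then have "LK (sv n ^ Suc N) w = (\<Sum>i<n. fact N / mfac n w * real (LK w i))"
      unfolding eq by (intro sum.cong) auto
    then have "LK (sv n ^ Suc N) w = fact N / mfac n w * real (degn n w)"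
      by (simp add: sum_distrib_left degn_def)
    then show ?thesis using True by (simp add: field_simps)
  next
    case False
    have "\<And>i. i < n \<Longrightarrow> (if LK w i \<ge> 1 then LK (sv n ^ N) (w - ev i) else 0) = 0"
    proof -
      fix i assume i: "i < n"
      show "(if LK w i \<ge> 1 then LK (sv n ^ N) (w - ev i) else 0) = 0"
        using False degn_minus_e[OF i, of w] by (auto simp: Suc.IH mon_in_minus_e[OF i])
    qed
    then have "LK (sv n ^ Suc N) w = 0" unfolding eq by simp
    then show ?thesis using False by auto
  qed
qed



lemma min_simplex:
  fixes g :: rpoly
  assumes keys: "\<And>b. b \<in> KS g \<Longrightarrow> mon_in n b"
    and pos: "\<And>x. (\<forall>i<n. x i \<ge> 0) \<Longrightarrow> (\<Sum>i<n. x i) = 1 \<Longrightarrow> eval_poly g x > 0"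
  shows "\<exists>\<mu>>0. \<forall>x. (\<forall>i<n. x i \<ge> 0) \<longrightarrow> (\<Sum>i<n. x i) = 1 \<longrightarrow> eval_poly g x \<ge> \<mu>"
proof (rule ccontr)
  assume "\<not> ?thesis"
  then have "\<forall>k. \<exists>x. (\<forall>i<n. x i \<ge> 0) \<and> (\<Sum>i<n. x i) = 1 \<and> eval_poly g x < inverse (real (Suc k))"
    by (metis inverse_positive_iff_positive not_le of_nat_0_less_iff zero_less_Suc)
  then obtain X where X: "\<And>k. (\<forall>i<n. X k i \<ge> 0)" "\<And>k. (\<Sum>i<n. X k i) = 1"
      "\<And>k. eval_poly g (X k) < inverse (real (Suc k))"
    by metis
  have le1: "X k i \<le> 1" if "i < n" for k i
  proof -
    have "X k i \<le> (\<Sum>j<n. X k j)"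
      using that X(1) by (intro member_le_sum) auto
    then show ?thesis using X(2) by simp
  qed
  have "\<forall>\<delta>\<subseteq>{..<n}. \<exists>l::nat\<Rightarrow>real. \<exists> r::nat\<Rightarrow>nat.
    strict_mono r \<and> (\<forall>\<epsilon>>0. eventually (\<lambda>m. \<forall>i\<in>\<delta>. dist (X (r m) i) (l i) < \<epsilon>) sequentially)"
  proof (rule compact_lemma_general[where proj = "\<lambda>x k. x k" and unproj = "\<lambda>x. x"])
    fix k assume "k \<in> {..<n}"
    then have "(\<lambda>x. x k) ` range X \<subseteq> {0..1}" using X(1) le1 by auto
    then show "bounded ((\<lambda>x. x k) ` range X)" by (rule bounded_subset[OF bounded_closed_interval])
  qed auto
  then obtain l r where r: "strict_mono r"
    and conv: "\<forall>\<epsilon>>0. eventually (\<lambda>m. \<forall>i\<in>{..<n}. dist (X (r m) i) (l i) < \<epsilon>) sequentially"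
    by blast
  have lim: "(\<lambda>m. X (r m) i) \<longlonglongrightarrow> l i" if "i < n" for i
    unfolding tendsto_iff
  proof (intro allI impI)
    fix \<epsilon> :: real assume "\<epsilon> > 0"
    with conv have "eventually (\<lambda>m. \<forall>i\<in>{..<n}. dist (X (r m) i) (l i) < \<epsilon>) sequentially" by blast
    then show "eventually (\<lambda>m. dist (X (r m) i) (l i) < \<epsilon>) sequentially"
      by eventually_elim (use that in auto)
  qed
  have l0: "\<forall>i<n. l i \<ge> 0"
    using lim X(1) by (meson LIMSEQ_le_const)
  have "(\<lambda>m. \<Sum>i<n. X (r m) i) \<longlonglongrightarrow> (\<Sum>i<n. l i)"
    by (intro tendsto_sum) (use lim in auto)
  then have l1: "(\<Sum>i<n. l i) = 1" using X(2) by (simp add: LIMSEQ_const_iff)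
  have "(\<lambda>m. eval_poly g (X (r m))) \<longlonglongrightarrow> eval_poly g l"
    unfolding eval_poly_def
  proof (intro tendsto_sum tendsto_mult tendsto_const tendsto_prod tendsto_power)
    fix b i assume "b \<in> KS g" "i \<in> KS b"
    then have "i < n" using keys unfolding mon_in_def by auto
    then show "(\<lambda>m. X (r m) i) \<longlonglongrightarrow> l i" by (rule lim)
  qed
  moreover have "(\<lambda>m. inverse (real (Suc m))) \<longlonglongrightarrow> 0"
    by (rule LIMSEQ_inverse_real_of_nat)
  moreover have "eval_poly g (X (r m)) \<le> inverse (real (Suc m))" for m
  proof -
    have "m \<le> r m" using r by (rule seq_suble)
    then have "inverse (real (Suc (r m))) \<le> inverse (real (Suc m))"
      by (intro le_imp_inverse_le) auto
    then show ?thesis using X(3)[of "r m"] by linarith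
  qed
  ultimately have "eval_poly g l \<le> 0" by (intro LIMSEQ_le) auto
  with pos[OF l0 l1] show False by simp
qed



definition ff :: "nat \<Rightarrow> nat \<Rightarrow> real" where "ff a b = (\<Prod>k<b. (real a - real k))"
definition ffp :: "nat \<Rightarrow> (nat \<Rightarrow>\<^sub>0 nat) \<Rightarrow> (nat \<Rightarrow>\<^sub>0 nat) \<Rightarrow> real" where
  "ffp n a b = (\<Prod>i<n. ff (LK a i) (LK b i))"
definition le_pm :: "(nat \<Rightarrow>\<^sub>0 nat) \<Rightarrow> (nat \<Rightarrow>\<^sub>0 nat) \<Rightarrow> bool" where
  "le_pm b a \<longleftrightarrow> (\<forall>i. LK b i \<le> LK a i)"

lemma fact_ff: "b \<le> a \<Longrightarrow> (fact a :: real) = fact (a - b) * ff a b"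
proof (induction b)
  case 0 then show ?case by (simp add: ff_def)
next
  case (Suc b)
  then have "(fact (a - b) :: real) = real (a - b) * fact (a - Suc b)"
    by (metis Suc_diff_le diff_Suc_Suc diff_zero fact_Suc le_SucE less_imp_le_nat not_less_eq_eq)
  then show ?case using Suc by (simp add: ff_def of_nat_diff)
qed

lemma ff_zero: "a < b \<Longrightarrow> ff a b = 0"
  unfolding ff_def by (rule prod_zero) auto

lemma poly_expand: "(p::rpoly) = (\<Sum>b\<in>KS p. SG b (LK p b))"
  by (rule poly_mapping_eqI) (auto simp: lookup_sum lookup_single when_def in_keys_iff)

lemma coef1:
  assumes a: "mon_in n a" "degn n a = N + e" and b: "mon_in n b" "degn n b = e"
  shows "(if le_pm b a then LK (sv n ^ N) (a - b) else 0) = fact N / mfac n a * ffp n a b"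
proof (cases "le_pm b a")
  case True
  then have le: "\<And>i. LK b i \<le> LK a i" by (simp add: le_pm_def)
  have m: "mon_in n (a - b)" using a(1) unfolding mon_in_iff by (simp add: lk_minus_nat)
  have "degn n (a - b) = degn n a - degn n b"
    unfolding degn_def lk_minus_nat by (rule sum_subtractf_nat) (use le in auto)
  then have d: "degn n (a - b) = N" using a b by simp
  have "mfac n a = mfac n (a - b) * ffp n a b"
    unfolding mfac_def ffp_def lk_minus_nat prod.distrib[symmetric]
    by (intro prod.cong refl fact_ff le)
  moreover have "ffp n a b \<noteq> 0"
    using mfac_pos[of n a] calculation by auto
  ultimately show ?thesis using True m d mfac_pos[of n "a-b"]
    by (simp add: lookup_sv_pow field_simps)
next
  case False
  then obtain i where i: "LK a i < LK b i" by (auto simp: le_pm_def not_le)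
  then have "i < n" using b(1) unfolding mon_in_iff by (metis not_le not_less0)
  then have "ffp n a b = 0" unfolding ffp_def using ff_zero[OF i] by (intro prod_zero) auto
  then show ?thesis using False by simp
qed

lemma coef2:
  fixes g :: rpoly
  assumes g: "\<And>b. b \<in> KS g \<Longrightarrow> mon_in n b \<and> degn n b = e"
  shows "LK (sv n ^ N * g) a = (if mon_in n a \<and> degn n a = N + e
     then fact N / mfac n a * (\<Sum>b\<in>KS g. LK g b * ffp n a b) else 0)"
proof -
  have "sv n ^ N * g = (\<Sum>b\<in>KS g. SG b (LK g b) * sv n ^ N)"
    by (subst poly_expand[of g]) (simp add: sum_distrib_left mult.commute)
  then have eq: "LK (sv n ^ N * g) a = (\<Sum>b\<in>KS g. LK g b * (if le_pm b a then LK (sv n ^ N) (a - b) else 0))"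
    by (simp add: lookup_sum lookup_single_mult le_pm_def if_distrib cong: if_cong)
  show ?thesis
  proof (cases "mon_in n a \<and> degn n a = N + e")
    case True
    then show ?thesis unfolding eq using g
      by (simp add: coef1 sum_distrib_left field_simps)
  next
    case False
    have "LK g b * (if le_pm b a then LK (sv n ^ N) (a - b) else 0) = 0" if "b \<in> KS g" for b
    proof (cases "le_pm b a \<and> LK (sv n ^ N) (a - b) \<noteq> 0")
      case True
      then have le: "\<And>i. LK b i \<le> LK a i" by (simp add: le_pm_def)
      from True have m: "mon_in n (a - b)" "degn n (a - b) = N" by (auto simp: lookup_sv_pow split: if_splits)
      have ab: "a = (a - b) + b" using le by (simp add: poly_mapping_eq_iff fun_eq_iff lookup_add lk_minus_nat)
      have "mon_in n a" using m(1) g[OF that] unfolding mon_in_iff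
        by (subst ab) (simp add: lookup_add)
      moreover have "degn n a = N + e" using m(2) g[OF that] unfolding degn_def
        by (subst ab) (simp add: lookup_add sum.distrib)
      ultimately show ?thesis using False by simp
    qed auto
    then have "LK (sv n ^ N * g) a = 0" unfolding eq by (intro sum.neutral) auto
    then show ?thesis using False by auto
  qed
qed



lemma prod_abs_le1: "(\<And>x. x \<in> S \<Longrightarrow> \<bar>u x\<bar> \<le> (1::real)) \<Longrightarrow> \<bar>prod u S\<bar> \<le> 1"
  by (simp add: abs_prod prod_le_1)

lemma prod_diff_le:
  fixes u v :: "'a \<Rightarrow> real"
  assumes "finite S" "\<And>x. x \<in> S \<Longrightarrow> \<bar>u x\<bar> \<le> 1" "\<And>x. x \<in> S \<Longrightarrow> \<bar>v x\<bar> \<le> 1"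
  shows "\<bar>prod u S - prod v S\<bar> \<le> (\<Sum>x\<in>S. \<bar>u x - v x\<bar>)"
  using assms
proof (induction S rule: finite_induct)
  case empty then show ?case by simp
next
  case (insert a S)
  let ?U = "prod u S" and ?V = "prod v S"
  have hU: "\<bar>?V\<bar> \<le> 1" using insert by (intro prod_abs_le1) auto
  have ua: "\<bar>u a\<bar> \<le> 1" using insert by auto
  have IH: "\<bar>?U - ?V\<bar> \<le> (\<Sum>x\<in>S. \<bar>u x - v x\<bar>)" using insert by auto
  have "u a * ?U - v a * ?V = u a * (?U - ?V) + (u a - v a) * ?V" by (simp add: algebra_simps)
  then have "\<bar>u a * ?U - v a * ?V\<bar> \<le> \<bar>u a\<bar> * \<bar>?U - ?V\<bar> + \<bar>u a - v a\<bar> * \<bar>?V\<bar>"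
    by (metis abs_mult abs_triangle_ineq)
  also have "\<dots> \<le> 1 * \<bar>?U - ?V\<bar> + \<bar>u a - v a\<bar> * 1"
    by (intro add_mono mult_mono ua hU) auto
  finally show ?case using IH insert by simp
qed

lemma approx:
  fixes a b :: "nat \<Rightarrow>\<^sub>0 nat" and M :: nat
  assumes a: "mon_in n a" "degn n a = M" and Me: "e \<le> M" "M > 0"
    and b: "degn n b = e"
  shows "\<bar>ffp n a b / real M ^ e - (\<Prod>i<n. (real (LK a i) / M) ^ LK b i)\<bar> \<le> real e * e / M"
proof -
  define U where "U i = (\<Prod>k<LK b i. (real (LK a i) - real k) / M)" for i
  define V where "V i = (\<Prod>k<LK b i. real (LK a i) / M)" for i
  have MeP: "real M ^ e = (\<Prod>i<n. real M ^ LK b i)"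
    using b unfolding degn_def by (metis power_sum)
  have E1: "ffp n a b / real M ^ e = (\<Prod>i<n. U i)"
    unfolding MeP ffp_def U_def ff_def prod_dividef[symmetric]
    by (intro prod.cong refl) (simp add: prod_dividef)
  have E2: "(\<Prod>i<n. (real (LK a i) / M) ^ LK b i) = (\<Prod>i<n. V i)"
    unfolding V_def by simp
  have aiM: "LK a i \<le> M" if "i < n" for i
    using a that unfolding degn_def by (metis finite_lessThan lessThan_iff member_le_sum zero_le)
  have bie: "LK b i \<le> e" if "i < n" for i
    using b that unfolding degn_def by (metis finite_lessThan lessThan_iff member_le_sum zero_le)
  have uk: "\<bar>(real (LK a i) - real k) / M\<bar> \<le> 1" if "i < n" "k < LK b i" for i k
  proof -
    have "k \<le> M" using bie[OF that(1)] that(2) Me by linarith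
    then show ?thesis using aiM[OF that(1)] Me by (auto simp: abs_le_iff field_simps)
  qed
  have vk: "\<bar>real (LK a i) / M\<bar> \<le> 1" if "i < n" for i
    using aiM[OF that] Me by (auto simp: field_simps)
  have inner: "\<bar>U i - V i\<bar> \<le> real (LK b i) * e / M" if "i < n" for i
  proof -
    have "\<bar>U i - V i\<bar> \<le> (\<Sum>k<LK b i. \<bar>(real (LK a i) - real k) / M - real (LK a i) / M\<bar>)"
      unfolding U_def V_def by (rule prod_diff_le) (use uk vk that in auto)
    also have "\<dots> \<le> (\<Sum>k<LK b i. real e / M)"
    proof (rule sum_mono)
      fix k assume "k \<in> {..<LK b i}"
      then have "k \<le> e" using bie[OF that] by simp
      then show "\<bar>(real (LK a i) - real k) / M - real (LK a i) / M\<bar> \<le> real e / M"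
        using Me by (auto simp: field_simps)
    qed
    finally show ?thesis by simp
  qed
  have "\<bar>(\<Prod>i<n. U i) - (\<Prod>i<n. V i)\<bar> \<le> (\<Sum>i<n. \<bar>U i - V i\<bar>)"
  proof (rule prod_diff_le)
    fix i assume i: "i \<in> {..<n}"
    show "\<bar>U i\<bar> \<le> 1" unfolding U_def by (rule prod_abs_le1) (use uk i in auto)
    show "\<bar>V i\<bar> \<le> 1" unfolding V_def by (rule prod_abs_le1) (use vk i in auto)
  qed simp
  also have "\<dots> \<le> (\<Sum>i<n. real (LK b i) * e / M)"
    by (rule sum_mono) (rule inner, simp)
  also have "\<dots> = real e * e / M"
    using b unfolding degn_def by (simp add: sum_divide_distrib[symmetric] sum_distrib_right[symmetric] flip: of_nat_sum)
  finally show ?thesis using E1 E2 by simp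
qed



lemma fact_le_pow: "fact (N + e) \<le> (fact N * (N + e) ^ e :: nat)"
proof (induction e)
  case 0 then show ?case by simp
next
  case (Suc e)
  have "fact (N + Suc e) = (N + Suc e) * fact (N + e)" by simp
  also have "\<dots> \<le> (N + Suc e) * (fact N * (N + e) ^ e)" using Suc by (rule mult_le_mono2)
  also have "\<dots> \<le> (N + Suc e) * (fact N * (N + Suc e) ^ e)"
    by (intro mult_le_mono order.refl power_mono) auto
  finally show ?case by (simp add: algebra_simps)
qed

lemma eval_prod_n:
  assumes "\<And>b. b \<in> KS g \<Longrightarrow> mon_in n b"
  shows "eval_poly g x = (\<Sum>b\<in>KS g. LK g b * (\<Prod>i<n. x i ^ LK b i))"
  unfolding eval_poly_def
proof (intro sum.cong refl arg_cong[where f="\<lambda>y. _ * y"])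
  fix b assume "b \<in> KS g"
  then have "KS b \<subseteq> {..<n}" using assms mon_in_def by blast
  then show "(\<Prod>i\<in>KS b. x i ^ LK b i) = (\<Prod>i<n. x i ^ LK b i)"
    by (intro prod.mono_neutral_left) (auto simp: in_keys_iff)
qed

lemma polya:
  fixes g :: rpoly
  assumes g: "\<And>b. b \<in> KS g \<Longrightarrow> mon_in n b \<and> degn n b = e"
    and pos: "\<And>x. (\<forall>i<n. x i \<ge> 0) \<Longrightarrow> (\<Sum>i<n. x i) = 1 \<Longrightarrow> eval_poly g x > 0"
  shows "\<exists>\<eta>>0. \<exists>N0. \<forall>N\<ge>N0. \<forall>a. LK (sv n ^ N * g) a \<ge> \<eta> * LK (sv n ^ (N + e)) a"
proof -
  obtain \<mu> where mu: "\<mu> > 0" "\<And>x. (\<forall>i<n. x i \<ge> 0) \<Longrightarrow> (\<Sum>i<n. x i) = 1 \<Longrightarrow> eval_poly g x \<ge> \<mu>"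
    using min_simplex[of g n] g pos by blast
  define A where "A = (\<Sum>b\<in>KS g. \<bar>LK g b\<bar>)"
  have A0: "A \<ge> 0" unfolding A_def by (simp add: sum_nonneg)
  define N0 where "N0 = nat \<lceil>2 * A * e * e / \<mu>\<rceil> + 1"
  show ?thesis
  proof (intro exI conjI allI impI)
    show "\<mu> / 2 > 0" using mu by simp
    fix N a assume N: "N0 \<le> N"
    define M where "M = N + e"
    have M0: "M > 0" using N unfolding N0_def M_def by simp
    have "2 * A * e * e / \<mu> < real N0" unfolding N0_def by linarith
    also have "\<dots> \<le> M" using N unfolding M_def by simp
    finally have MA: "A * e * e / M \<le> \<mu> / 2" using mu M0 by (simp add: field_simps)
    show "LK (sv n ^ N * g) a \<ge> \<mu> / 2 * LK (sv n ^ (N + e)) a"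
    proof (cases "mon_in n a \<and> degn n a = N + e")
      case False
      then show ?thesis by (auto simp: coef2[OF g] lookup_sv_pow)
    next
      case True
      define x where "x i = real (LK a i) / M" for i
      define S where "S = (\<Sum>b\<in>KS g. LK g b * ffp n a b)"
      have x0: "\<forall>i<n. x i \<ge> 0" unfolding x_def by simp
      have x1: "(\<Sum>i<n. x i) = 1" unfolding x_def using True M0
        by (simp add: sum_divide_distrib[symmetric] M_def degn_def flip: of_nat_sum of_nat_add)
      have ev: "eval_poly g x = (\<Sum>b\<in>KS g. LK g b * (\<Prod>i<n. x i ^ LK b i))"
        using g by (intro eval_prod_n) auto
      have each: "LK g b * (ffp n a b / real M ^ e) \<ge> LK g b * (\<Prod>i<n. x i ^ LK b i) - \<bar>LK g b\<bar> * (real e * e / M)"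
        if "b \<in> KS g" for b
      proof -
        have ap: "\<bar>ffp n a b / real M ^ e - (\<Prod>i<n. x i ^ LK b i)\<bar> \<le> real e * e / M"
          unfolding x_def using True g[OF that] M0 by (intro approx) (auto simp: M_def)
        have "\<bar>LK g b * (ffp n a b / real M ^ e) - LK g b * (\<Prod>i<n. x i ^ LK b i)\<bar> \<le> \<bar>LK g b\<bar> * (real e * e / M)"
          unfolding right_diff_distrib[symmetric] abs_mult by (intro mult_left_mono ap) auto
        then show ?thesis by linarith
      qed
      have "S / real M ^ e = (\<Sum>b\<in>KS g. LK g b * (ffp n a b / real M ^ e))"
        unfolding S_def by (simp add: sum_divide_distrib)
      also have "\<dots> \<ge> (\<Sum>b\<in>KS g. LK g b * (\<Prod>i<n. x i ^ LK b i) - \<bar>LK g b\<bar> * (real e * e / M))"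
        by (intro sum_mono each)
      finally have "S / real M ^ e \<ge> eval_poly g x - A * (real e * e / M)"
        unfolding ev A_def by (simp add: sum_subtractf sum_distrib_right sum_divide_distrib)
      moreover have "eval_poly g x \<ge> \<mu>" using mu(2)[OF x0 x1] .
      moreover have "A * (real e * e / M) \<le> \<mu> / 2" using MA by simp
      ultimately have "S / real M ^ e \<ge> \<mu> / 2" by linarith
      then have SM: "S \<ge> \<mu> / 2 * real M ^ e" using M0 by (simp add: field_simps)
      have fM: "(fact M :: real) \<le> fact N * real M ^ e"
        using fact_le_pow[of N e] unfolding M_def by (metis of_nat_fact of_nat_le_iff of_nat_mult of_nat_power)
      have "\<mu> / 2 * fact M \<le> \<mu> / 2 * (fact N * real M ^ e)"
        using fM mu by (intro mult_left_mono) auto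
      also have "\<dots> \<le> fact N * S"
        using SM by (simp add: mult_left_mono algebra_simps)
      finally have key: "\<mu> / 2 * fact M \<le> fact N * S" .
      have "LK (sv n ^ N * g) a = fact N / mfac n a * S"
        using True by (simp add: coef2[OF g] S_def)
      moreover have "LK (sv n ^ (N + e)) a = fact M / mfac n a"
        using True by (simp add: lookup_sv_pow M_def)
      moreover have "\<mu> / 2 * (fact M / mfac n a) \<le> fact N / mfac n a * S"
      proof -
        have "\<mu> / 2 * (fact M / mfac n a) = (\<mu> / 2 * fact M) / mfac n a" by simp
        also have "\<dots> \<le> (fact N * S) / mfac n a"
          using key mfac_pos[of n a] by (intro divide_right_mono) auto
        finally show ?thesis by simp
      qed
      ultimately show ?thesis by simp
    qed
  qed
qed



definition cst :: "real \<Rightarrow> rpoly" where "cst c = SG 0 c"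

lemma lk_cst_mult: "LK (cst c * p) w = c * LK p w"
  unfolding cst_def lookup_single_mult by simp

lemma cst_mult: "cst a * cst b = cst (a * b)"
  unfolding cst_def by (simp add: mult_single)

lemma cst_add: "cst a + cst b = cst (a + b)"
  unfolding cst_def by (simp add: single_add)

lemma cst_diff: "cst a - cst b = cst (a - b)"
  unfolding cst_def by (simp add: single_diff)

lemma cst_one: "cst 1 = 1" unfolding cst_def by simp

lemma cst_power: "cst a ^ k = cst (a ^ k)"
  by (induction k) (auto simp: cst_one cst_mult)

lemma of_nat_cst: "(of_nat k :: rpoly) = cst (real k)"
  unfolding cst_def by simp

definition pge :: "rpoly \<Rightarrow> rpoly \<Rightarrow> bool" where "pge p q \<longleftrightarrow> nn (p - q)"

lemma nn_cst: "c \<ge> 0 \<Longrightarrow> nn (cst c)"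
  unfolding cst_def by (rule nn_single)

lemma nn_pge: "nn p \<longleftrightarrow> pge p 0" by (simp add: pge_def)

lemma pge_refl: "pge p p" by (simp add: pge_def nn_def)

lemma pge_trans: "pge p q \<Longrightarrow> pge q r \<Longrightarrow> pge p r"
  unfolding pge_def using nn_add[of "p - q" "q - r"] by simp

lemma pge_add: "pge p1 q1 \<Longrightarrow> pge p2 q2 \<Longrightarrow> pge (p1 + p2) (q1 + q2)"
  unfolding pge_def using nn_add[of "p1 - q1" "p2 - q2"] by (simp add: algebra_simps)

lemma pge_mult: "nn c \<Longrightarrow> pge p q \<Longrightarrow> pge (c * p) (c * q)"
  unfolding pge_def using nn_mult[of c "p - q"] by (simp add: algebra_simps)

lemma pge_sum: "(\<And>i. i \<in> A \<Longrightarrow> pge (f i) (h i)) \<Longrightarrow> pge (sum f A) (sum h A)"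
  unfolding pge_def using nn_sum[of A "\<lambda>i. f i - h i"] by (simp add: sum_subtractf)

lemma pge_cst_mono: "a \<ge> b \<Longrightarrow> nn p \<Longrightarrow> pge (cst a * p) (cst b * p)"
  unfolding pge_def using nn_mult[of "cst (a - b)" p] nn_cst[of "a - b"]
  by (simp add: cst_diff[symmetric] algebra_simps)

lemma pge_power: "nn q \<Longrightarrow> pge p q \<Longrightarrow> pge (p ^ k) (q ^ k)"
proof (induction k)
  case 0 then show ?case by (simp add: pge_refl)
next
  case (Suc k)
  have nnp: "nn p" using Suc.prems nn_add[of "p - q" q] by (simp add: pge_def)
  have "p ^ Suc k - q ^ Suc k = p * (p ^ k - q ^ k) + q ^ k * (p - q)" by (simp add: algebra_simps)
  moreover have "nn (p * (p ^ k - q ^ k))" using Suc nnp by (intro nn_mult) (auto simp: pge_def)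
  moreover have "nn (q ^ k * (p - q))" using Suc by (intro nn_mult nn_power) (auto simp: pge_def)
  ultimately show ?case unfolding pge_def by (simp add: nn_add)
qed



lemma binom_ratio:
  fixes K R \<eta> c :: real and L :: nat
  assumes L: "L \<ge> 1" and K: "K \<ge> 0" and R: "R \<ge> 0" and eta: "\<eta> > 0" and c: "c > 0"
  shows "\<exists>m0. \<forall>m\<ge>m0. \<forall>j<L. K * real (m choose j) * R ^ L \<le> \<eta> * c ^ L * real (m choose (j + L))"
proof -
  define T where "T = real (2 * L) ^ (2 * L)"
  have T1: "T \<ge> 1" unfolding T_def using L by (intro one_le_power) auto
  define D where "D = K * R ^ L * T / (\<eta> * c ^ L)"
  show ?thesis
  proof (intro exI allI impI)
    fix m j assume m: "max (2 * L) (nat \<lceil>D\<rceil> + 1) \<le> m" and j: "j < L"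
    have m2L: "2 * L \<le> m" and mD: "D < real m" using m by linarith+
    have m1: "real m \<ge> 1" using m2L L by simp
    have "real m \<le> real m ^ L" using m1 L by (metis le_trans power_increasing power_one_right)
    with mD have mLD: "D \<le> real m ^ L" by linarith
    have c1: "real (m choose j) \<le> real m ^ j"
      using binomial_le_pow[of j m] j m2L by (metis of_nat_le_iff of_nat_power le_trans less_imp_le_nat le_add1 mult_2 add_le_mono)
    have "(real m / real (2 * L)) ^ (j + L) \<le> (real m / real (j + L)) ^ (j + L)"
      using j L by (intro power_mono divide_left_mono) auto
    also have "\<dots> \<le> real (m choose (j + L))"
      using j m2L by (intro binomial_ge_n_over_k_pow_k) simp
    finally have c2: "real m ^ (j + L) / real (2 * L) ^ (j + L) \<le> real (m choose (j + L))"
      by (simp add: power_divide)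
    have "real (2 * L) ^ (j + L) \<le> T"
      unfolding T_def using j L by (intro power_increasing) auto
    then have "real m ^ (j + L) / T \<le> real m ^ (j + L) / real (2 * L) ^ (j + L)"
      using L T1 by (intro divide_left_mono) auto
    with c2 have c3: "real m ^ j * (real m ^ L / T) \<le> real (m choose (j + L))"
      by (simp add: power_add)
    have "K * R ^ L = \<eta> * c ^ L * (D / T)"
      unfolding D_def using eta c T1 by (simp add: field_simps)
    also have "\<dots> \<le> \<eta> * c ^ L * (real m ^ L / T)"
      using mLD eta c T1 by (intro mult_left_mono divide_right_mono) auto
    finally have kr: "K * R ^ L \<le> \<eta> * c ^ L * (real m ^ L / T)" .
    have "K * real (m choose j) * R ^ L = (K * R ^ L) * real (m choose j)" by simp
    also have "\<dots> \<le> (K * R ^ L) * real m ^ j"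
      using c1 K R by (intro mult_left_mono) auto
    also have "\<dots> \<le> (\<eta> * c ^ L * (real m ^ L / T)) * real m ^ j"
      using kr by (intro mult_right_mono) auto
    also have "\<dots> = \<eta> * c ^ L * (real m ^ j * (real m ^ L / T))" by simp
    also have "\<dots> \<le> \<eta> * c ^ L * real (m choose (j + L))"
      using c3 eta c by (intro mult_left_mono) auto
    finally show "K * real (m choose j) * R ^ L \<le> \<eta> * c ^ L * real (m choose (j + L))" .
  qed
qed



lemma pge_mult_right: "nn c \<Longrightarrow> pge p q \<Longrightarrow> pge (p * c) (q * c)"
  using pge_mult[of c p q] by (simp add: mult.commute)

lemma combine:
  fixes u r g Z :: rpoly
  assumes nu: "nn u" and nr: "nn r" and nZ: "nn Z"
    and c: "c > 0" and R: "R \<ge> 0" and K: "K \<ge> 0" and eta: "\<eta> > 0" and L: "L \<ge> 1"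
    and Rr: "pge (cst R * u) r"
    and Q: "pge g (- (cst K * Z))"
    and P: "pge (u ^ L * g) (cst \<eta> * u ^ L * Z)"
  shows "\<exists>m\<ge>1. nn ((cst c * u + r) ^ m * g)"
proof -
  obtain m0 where m0: "\<And>m j. m \<ge> m0 \<Longrightarrow> j < L \<Longrightarrow>
      K * real (m choose j) * R ^ L \<le> \<eta> * c ^ L * real (m choose (j + L))"
    using binom_ratio[OF L K R eta c] by blast
  define m where "m = max m0 (2 * L)"
  have mm0: "m \<ge> m0" and m2L: "m \<ge> 2 * L" unfolding m_def by auto
  define B where "B j = cst (real (m choose j) * c ^ j) * u ^ j * r ^ (m - j)" for j
  have nB: "nn (B j)" for j
    unfolding B_def using c by (intro nn_mult nn_power nn_cst nu nr) auto
  have expand: "(cst c * u + r) ^ m * g = (\<Sum>j\<le>m. B j * g)"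
    unfolding binomial_ring sum_distrib_right B_def
    by (intro sum.cong refl) (simp only: of_nat_cst power_mult_distrib cst_power cst_mult[symmetric] mult.assoc)
  define W where "W j = (if j < L then - (cst K * B j * Z) else cst \<eta> * B j * Z)" for j
  have TW: "pge (B j * g) (W j)" if "j \<le> m" for j
  proof (cases "j < L")
    case True
    have "pge (B j * g) (B j * (- (cst K * Z)))" by (rule pge_mult[OF nB Q])
    then show ?thesis using True by (simp add: W_def mult_ac)
  next
    case False
    define B' where "B' = cst (real (m choose j) * c ^ j) * u ^ (j - L) * r ^ (m - j)"
    have nB': "nn B'" unfolding B'_def using c by (intro nn_mult nn_power nn_cst nu nr) auto
    have uj: "u ^ j = u ^ (j - L) * u ^ L" using False by (simp flip: power_add)
    have e1: "B j * g = B' * (u ^ L * g)" unfolding B_def B'_def uj by (simp add: mult_ac)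
    have e2: "W j = B' * (cst \<eta> * u ^ L * Z)" unfolding W_def B_def B'_def uj using False by (simp add: mult_ac)
    show ?thesis unfolding e1 e2 by (rule pge_mult[OF nB' P])
  qed
  have W_nn: "nn (W j)" if "j \<ge> L" for j
    using that eta unfolding W_def by (auto intro!: nn_mult nB nZ nn_cst)
  have s1: "pge ((cst c * u + r) ^ m * g) (\<Sum>j\<le>m. W j)"
    unfolding expand by (intro pge_sum TW) auto
  have split: "{..m} = {..<L} \<union> {L..m}" using m2L by auto
  have sW: "(\<Sum>j\<le>m. W j) = (\<Sum>j<L. W j) + (\<Sum>j\<in>{L..m}. W j)"
    unfolding split by (rule sum.union_disjoint) auto
  have sub: "{L..<2*L} \<subseteq> {L..m}" using m2L by auto
  have sW2: "(\<Sum>j\<in>{L..m}. W j) = (\<Sum>j\<in>{L..m} - {L..<2*L}. W j) + (\<Sum>j\<in>{L..<2*L}. W j)"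
    by (rule sum.subset_diff[OF sub]) simp
  have rest: "nn (\<Sum>j\<in>{L..m} - {L..<2*L}. W j)" by (intro nn_sum W_nn) auto
  have reidx: "(\<Sum>j\<in>{L..<2*L}. W j) = (\<Sum>j<L. W (j + L))"
  proof -
    have "{L..<2*L} = (\<lambda>j. j + L) ` {..<L}"
    proof
      show "(\<lambda>j. j + L) ` {..<L} \<subseteq> {L..<2*L}" by auto
      show "{L..<2*L} \<subseteq> (\<lambda>j. j + L) ` {..<L}"
      proof
        fix x assume "x \<in> {L..<2*L}"
        then have "x = (x - L) + L" "x - L \<in> {..<L}" by auto
        then show "x \<in> (\<lambda>j. j + L) ` {..<L}" by (rule rev_image_eqI[rotated])
      qed
    qed
    then show ?thesis by (simp add: sum.reindex)
  qed
  have pair: "nn (W j + W (j + L))" if j: "j < L" for j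
  proof -
    define X where "X = u ^ j * r ^ (m - (j + L)) * Z"
    have nX: "nn X" unfolding X_def by (intro nn_mult nn_power nu nr nZ)
    define a where "a = \<eta> * (real (m choose (j + L)) * c ^ (j + L))"
    define b where "b = K * (real (m choose j) * c ^ j)"
    have jm: "j + L \<le> m" using j m2L by simp
    have rm: "r ^ (m - j) = r ^ L * r ^ (m - (j + L))"
    proof -
      have "m - j = L + (m - (j + L))" using jm by simp
      then show ?thesis by (simp only: power_add)
    qed
    have w1: "W (j + L) = cst a * (u ^ L * X)"
      unfolding W_def B_def X_def a_def by (simp add: power_add cst_mult[symmetric] mult_ac)
    have w2: "W j = - (cst b * (r ^ L * X))"
      unfolding W_def B_def X_def b_def using j by (simp add: rm cst_mult[symmetric] mult_ac)
    have "pge ((cst R * u) ^ L) (r ^ L)" by (rule pge_power[OF nr Rr])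
    then have "pge ((cst R * u) ^ L * X) (r ^ L * X)" by (rule pge_mult_right[OF nX])
    then have P1: "pge (cst b * ((cst R * u) ^ L * X)) (cst b * (r ^ L * X))"
      using c K unfolding b_def by (intro pge_mult nn_cst) auto
    have E: "(cst b * ((cst R * u) ^ L * X)) = cst (b * R ^ L) * (u ^ L * X)"
      by (simp add: power_mult_distrib cst_power cst_mult[symmetric] mult_ac)
    have P3: "pge (cst a * (u ^ L * X)) (cst (b * R ^ L) * (u ^ L * X))"
    proof (rule pge_cst_mono)
      show "nn (u ^ L * X)" by (intro nn_mult nn_power nu nX)
      have "K * real (m choose j) * R ^ L \<le> \<eta> * c ^ L * real (m choose (j + L))"
        by (rule m0[OF mm0 j])
      then have "c ^ j * (K * real (m choose j) * R ^ L) \<le> c ^ j * (\<eta> * c ^ L * real (m choose (j + L)))"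
        using c by (intro mult_left_mono) auto
      then show "b * R ^ L \<le> a" unfolding a_def b_def by (simp add: power_add mult_ac)
    qed
    have "pge (cst a * (u ^ L * X)) (cst b * (r ^ L * X))"
      using pge_trans[OF P3 P1[unfolded E]] .
    then show ?thesis unfolding w1 w2 pge_def by (simp only: uminus_add_conv_diff)
  qed
  have "nn (\<Sum>j\<le>m. W j)"
  proof -
    have "(\<Sum>j\<le>m. W j) = (\<Sum>j<L. W j + W (j + L)) + (\<Sum>j\<in>{L..m} - {L..<2*L}. W j)"
      unfolding sW sW2 reidx sum.distrib by (simp add: add_ac)
    moreover have "nn (\<Sum>j<L. W j + W (j + L))" by (intro nn_sum pair) auto
    ultimately show ?thesis using rest nn_add by simp
  qed
  then have "nn ((cst c * u + r) ^ m * g)"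
    using s1 unfolding pge_def using nn_add by fastforce
  moreover have "m \<ge> 1" using m2L L by simp
  ultimately show ?thesis by blast
qed



theorem lemma5p1:
  fixes n d e :: nat and f g :: rpoly
  assumes f_form: "is_form n d f"
    and f_nonconst: "f \<noteq> 0" "d \<ge> 1"
    and f_pos: "\<And>w. mon_in n w \<Longrightarrow> mon_deg w = d \<Longrightarrow> Poly_Mapping.lookup f w > 0"
    and g_form: "is_form n e g"
    and g_pos: "\<And>x::nat \<Rightarrow> real. (\<forall>i<n. x i \<ge> 0) \<Longrightarrow> (\<exists>i<n. x i \<noteq> 0) \<Longrightarrow> eval_poly g x > 0"
    and deg_dvd: "d dvd e"
  shows "\<exists>m::nat. m \<ge> 1 \<and> (\<forall>w. Poly_Mapping.lookup (f ^ m * g) w \<ge> 0)"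
proof -
  have fk: "mon_in n w \<and> degn n w = d" if "w \<in> KS f" for w
    using f_form that mon_deg_eq unfolding is_form_def by auto
  have gk: "mon_in n w \<and> degn n w = e" if "w \<in> KS g" for w
    using g_form that mon_deg_eq unfolding is_form_def by auto
  define u where "u = sv n ^ d"
  define Z where "Z = sv n ^ e"
  have LKu: "LK u w = (if mon_in n w \<and> degn n w = d then fact d / mfac n w else 0)" for w
    unfolding u_def by (rule lookup_sv_pow)
  have LKZ: "LK Z w = (if mon_in n w \<and> degn n w = e then fact e / mfac n w else 0)" for w
    unfolding Z_def by (rule lookup_sv_pow)
  have u0: "LK u w \<ge> 0" for w using mfac_pos[of n w] by (simp add: LKu)
  have Z0: "LK Z w \<ge> 0" for w using mfac_pos[of n w] by (simp add: LKZ)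
  have nu: "nn u" using u0 by (simp add: nn_def)
  have nZ: "nn Z" using Z0 by (simp add: nn_def)
  have upos: "LK u w > 0" if "w \<in> KS f" for w using fk[OF that] mfac_pos[of n w] by (simp add: LKu)
  have Zpos: "LK Z w > 0" if "w \<in> KS g" for w using gk[OF that] mfac_pos[of n w] by (simp add: LKZ)
  define c where "c = Min (insert 1 ((\<lambda>w. LK f w / LK u w) ` KS u))"
  have c_pos: "c > 0"
  proof -
    have "c \<in> insert 1 ((\<lambda>w. LK f w / LK u w) ` KS u)" unfolding c_def by (intro Min_in) auto
    moreover have "LK f w / LK u w > 0" if "w \<in> KS u" for w
    proof -
      have "LK u w \<noteq> 0" using that by (simp add: in_keys_iff)
      then have "mon_in n w \<and> degn n w = d" by (simp add: LKu split: if_splits)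
      then have "LK f w > 0" using f_pos mon_deg_eq by auto
      then show ?thesis using u0[of w] \<open>LK u w \<noteq> 0\<close> by simp
    qed
    ultimately show ?thesis by auto
  qed
  have c_le: "c * LK u w \<le> LK f w" for w
  proof (cases "w \<in> KS u")
    case True
    have "c \<le> LK f w / LK u w" unfolding c_def using True by (intro Min_le) auto
    moreover have "LK u w > 0" using True u0[of w] by (simp add: in_keys_iff order_less_le)
    ultimately show ?thesis by (simp add: field_simps)
  next
    case False
    then have "LK u w = 0" by (simp add: in_keys_iff)
    moreover have "LK f w = 0" using False upos by (metis calculation in_keys_iff less_irrefl)
    ultimately show ?thesis by simp
  qed
  define r where "r = f - cst c * u"
  have f_eq: "f = cst c * u + r" unfolding r_def by simp
  have nr: "nn r" unfolding nn_def r_def using c_le by (simp add: lookup_minus lk_cst_mult)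
  define R where "R = Max (insert 0 ((\<lambda>w. LK f w / LK u w) ` KS f))"
  have R0: "R \<ge> 0" unfolding R_def by (intro Max_ge) auto
  have R_ge: "LK f w \<le> R * LK u w" for w
  proof (cases "w \<in> KS f")
    case True
    have "LK f w / LK u w \<le> R" unfolding R_def using True by (intro Max_ge) auto
    then show ?thesis using upos[OF True] by (simp add: field_simps)
  next
    case False
    then show ?thesis using R0 u0[of w] by (simp add: in_keys_iff)
  qed
  have Rr: "pge (cst R * u) r"
    unfolding pge_def nn_def r_def
  proof
    fix w
    have "c * LK u w \<ge> 0" using c_pos u0[of w] by simp
    then show "0 \<le> LK (cst R * u - (f - cst c * u)) w"
      using R_ge[of w] by (simp add: lookup_minus lk_cst_mult)
  qed
  define K where "K = Max (insert 0 ((\<lambda>w. \<bar>LK g w\<bar> / LK Z w) ` KS g))"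
  have K0: "K \<ge> 0" unfolding K_def by (intro Max_ge) auto
  have Q: "pge g (- (cst K * Z))"
    unfolding pge_def nn_def
  proof
    fix w
    have "\<bar>LK g w\<bar> \<le> K * LK Z w"
    proof (cases "w \<in> KS g")
      case True
      have "\<bar>LK g w\<bar> / LK Z w \<le> K" unfolding K_def using True by (intro Max_ge) auto
      then show ?thesis using Zpos[OF True] by (simp add: field_simps)
    next
      case False
      then show ?thesis using K0 Z0[of w] by (simp add: in_keys_iff)
    qed
    then show "0 \<le> LK (g - - (cst K * Z)) w"
      by (simp add: lookup_minus lk_cst_mult lookup_add)
  qed
  have gpos': "eval_poly g x > 0" if "\<forall>i<n. x i \<ge> 0" "(\<Sum>i<n. x i) = 1" for x
  proof (rule g_pos[OF that(1)])
    show "\<exists>i<n. x i \<noteq> 0"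
    proof (rule ccontr)
      assume "\<not> ?thesis"
      then have "(\<Sum>i<n. x i) = 0" by simp
      with that(2) show False by simp
    qed
  qed
  obtain \<eta> N0 where eta: "\<eta> > 0"
    and pol: "\<And>N a. N \<ge> N0 \<Longrightarrow> LK (sv n ^ N * g) a \<ge> \<eta> * LK (sv n ^ (N + e)) a"
    using polya[of g n e] gk gpos' by blast
  define L where "L = N0 + 1"
  have L1: "L \<ge> 1" unfolding L_def by simp
  have NL: "d * L \<ge> N0" unfolding L_def using f_nonconst(2)
    by (metis add.commute le_add1 le_trans mult_le_mono1 mult_1 plus_1_eq_Suc)
  have uL: "u ^ L = sv n ^ (d * L)" unfolding u_def by (simp add: power_mult)
  have P: "pge (u ^ L * g) (cst \<eta> * u ^ L * Z)"
    unfolding pge_def nn_def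
  proof
    fix w
    have "u ^ L * Z = sv n ^ (d * L + e)" unfolding uL Z_def by (simp add: power_add)
    then have "LK (cst \<eta> * u ^ L * Z) w = \<eta> * LK (sv n ^ (d * L + e)) w"
      by (simp add: mult.assoc lk_cst_mult)
    then show "0 \<le> LK (u ^ L * g - cst \<eta> * u ^ L * Z) w"
      using pol[OF NL, of w] unfolding uL by (simp add: lookup_minus)
  qed
  obtain m where "m \<ge> 1" "nn ((cst c * u + r) ^ m * g)"
    using combine[OF nu nr nZ c_pos R0 K0 eta L1 Rr Q P] by blast
  then show ?thesis unfolding f_eq[symmetric] nn_def by blast
qed


end
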